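(* Let $0\to\mathcal H_{\mathcal Q}\xrightarrow{inc}\mathcal E_{\mathcal R}\xrightarrow{proj}\mathcal L_{\mathcal N}\to0$ be a non-abelian extension of Nijenhuis Lie conformal algebras. Then the sequence $$1\longrightarrow\mathrm{Aut}^{\mathcal L,\mathcal H}_{\mathcal H}(\mathcal E_{\mathcal R})\xrightarrow{inc}\mathrm{Aut}_{\mathcal H}(\mathcal E_{\mathcal R})\xrightarrow{\Pi}\mathrm{Aut}(\mathcal H_{\mathcal Q})\times\mathrm{Aut}(\mathcal L_{\mathcal N})\xrightarrow{\mathfrak W}H^2_{nab}(\mathcal L_{\mathcal N},\mathcal H_{\mathcal Q})$$ is exact.
   Context: All spaces over $\mathbb C$. A Lie conformal algebra is a $\mathbb C[\partial]$-module with a $\mathbb C$-bilinear $\lambda$-bracket satisfying $[\partial a_\lambda b]=-\lambda[a_\lambda b]$, $[a_\lambda\partial b]=(\partial+\lambda)[a_\lambda b]$, $[a_\lambda b]=-[b_{-\partial-\lambda}a]$, $[a_\lambda[b_\mu c]]=[[a_\lambda b]_{\lambda+\mu}c]+[b_\mu[a_\lambda c]]$. A Nijenhuis operator is a $\mathbb C[\partial]$-linear $\mathcal N$ with $[\mathcal N(p)_\lambda\mathcal N(q)]=\mathcal N([\mathcal N(p)_\lambda q]+[p_\lambda\mathcal N(q)]-\mathcal N([p_\lambda q]))$; Nijenhuis Lie conformal algebras $\mathcal L_{\mathcal N}=(\mathcal L,[\cdot_\lambda\cdot]_{\mathcal L},\mathcal N)$, $\mathcal H_{\mathcal Q}=(\mathcal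 H,[\cdot_\lambda\cdot]_{\mathcal H},\mathcal Q)$, $\mathcal E_{\mathcal R}=(\mathcal E,[\cdot_\lambda\cdot]_{\mathcal E},\mathcal R)$ are Lie conformal algebras with Nijenhuis operators; morphisms are bracket-preserving $\mathbb C[\partial]$-linear maps intertwining the operators; $\mathrm{Aut}$ denotes bijective self-morphisms. A non-abelian extension is a short exact sequence of such morphisms as displayed, split as $\mathbb C[\partial]$-modules, with $\mathcal H\subset\mathcal E$ and $\mathcal R|_{\mathcal H}=\mathcal Q$; fix a $\mathbb C[\partial]$-linear section $s$ of $proj$ and the induced $\chi_\lambda(p,q)=[s(p)_\lambda s(q)]_{\mathcal E}-s([p_\lambda q]_{\mathcal L})$, $\rho(p)_\lambda h=[s(p)_\lambda h]_{\mathcal E}$, $\Phi(p)=\mathcal R(s(p))-s(\mathcal N(p))$. Non-abelian $2$-cocycles: triples $(\chi_\lambda:\mathcal L\otimes\mathcal L\to\mathcal H[\lambda],\rho:\mathcal L\otimes\mathcal H\to\mathcal H[\lambda],\Phi:\mathcal L\to\mathcal H)$ with (i) $\rho(p)_\lambda\rho(q)_\mu h-\rho(q)_\mu\rho(p)_\lambda h-\rho([p_\lambda q]_{\mathcal L})_{\lambda+\mu}h=[\chi_\lambda(p,q)_{\lambda+\mu}h]_{\mathcal H}$; (ii) $\rho(p)_\lambda\chi_\mu(q,r)+\rho(q)_\mu\chi_\lambda(r,p)+\rho(r)_{-\partial-\lambda-\mu}\chi_\lambda(p,q)-\chi_{\lambda+\mu}([q_\mu r]_{\mathcal L},p)-\chi_{\lambda+\mu}([r_{-\partial-\lambda}p]_{\mathcal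 L},q)-\chi_{\lambda+\mu}([p_\lambda q]_{\mathcal L},r)=0$; (iii) $\rho(\mathcal Np)_\lambda\mathcal Q(h)=\mathcal Q(\rho(\mathcal Np)_\lambda h+\rho(p)_\lambda\mathcal Q(h)-\mathcal Q(\rho(p)_\lambda h))+\mathcal Q([\Phi(p)_\lambda h]_{\mathcal H})-[\Phi(p)_\lambda\mathcal Q(h)]_{\mathcal H}$; (iv) $\chi_\lambda(\mathcal Np,\mathcal Nq)-\mathcal Q(\chi_\lambda(\mathcal Np,q)+\chi_\lambda(p,\mathcal Nq)-\mathcal Q\chi_\lambda(p,q))-\Phi([\mathcal N(p)_\lambda q]_{\mathcal L}+[p_\lambda\mathcal N(q)]_{\mathcal L}-\mathcal N[p_\lambda q]_{\mathcal L})+\rho(\mathcal Np)_\lambda\Phi(q)-\rho(\mathcal Nq)_{-\partial-\lambda}\Phi(p)+\mathcal Q(\rho(q)_{-\partial-\lambda}\Phi(p)-\rho(p)_\lambda\Phi(q)+\Phi([p_\lambda q]_{\mathcal L}))+[\Phi(p)_\lambda\Phi(q)]_{\mathcal H}=0$, for all $p,q,r\in\mathcal L$, $h\in\mathcal H$. Equivalence via a linear $\tau:\mathcal L\to\mathcal H$: $\rho(p)_\lambda h-\rho'(p)_\lambda h=[\tau(p)_\lambda h]_{\mathcal H}$, $\chi_\lambda(p,q)-\chi'_\lambda(p,q)=[\tau(p)_\lambda\tau(q)]_{\mathcal H}-\tau([p_\lambda q]_{\mathcal L})+\rho'(p)_\lambda\tau(q)-\rho'(q)_{-\partial-\lambda}\tau(p)$,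 $\Phi(p)-\Phi'(p)=\mathcal Q\tau(p)-\tau\mathcal N(p)$; $H^2_{nab}(\mathcal L_{\mathcal N},\mathcal H_{\mathcal Q})$ = equivalence classes. $\mathrm{Aut}_{\mathcal H}(\mathcal E_{\mathcal R})=\{\gamma\in\mathrm{Aut}(\mathcal E_{\mathcal R}):\gamma(\mathcal H)=\mathcal H\}$; $\Pi(\gamma)=(\gamma|_{\mathcal H},proj\circ\gamma\circ s)$; $\mathrm{Aut}^{\mathcal L,\mathcal H}_{\mathcal H}(\mathcal E_{\mathcal R})=\{\gamma\in\mathrm{Aut}_{\mathcal H}(\mathcal E_{\mathcal R}):\Pi(\gamma)=(\mathrm{Id}_{\mathcal H},\mathrm{Id}_{\mathcal L})\}$ with its inclusion $inc$. The Wells map is $\mathfrak W(\alpha,\beta)=[(\chi^{(\alpha,\beta)}_\lambda,\rho^{(\alpha,\beta)},\Phi^{(\alpha,\beta)})-(\chi_\lambda,\rho,\Phi)]$ where $\chi^{(\alpha,\beta)}_\lambda(p,q)=\alpha\chi_\lambda(\beta^{-1}p,\beta^{-1}q)$, $\rho^{(\alpha,\beta)}(p)_\lambda h=\alpha(\rho(\beta^{-1}p)_\lambda\alpha^{-1}h)$, $\Phi^{(\alpha,\beta)}(p)=\alpha\Phi(\beta^{-1}p)$. Exactness at $\mathrm{Aut}(\mathcal H_{\mathcal Q})\times\mathrm{Aut}(\mathcal L_{\mathcal N})$ means: the image of $\Pi$ equals the set of pairs $(\alpha,\beta)$ at which $\mathfrak W$ is trivial, i.e. for which $(\chi^{(\alpha,\beta)}_\lambda,\rho^{(\alpha,\beta)},\Phi^{(\alpha,\beta)})$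 is equivalent to $(\chi_\lambda,\rho,\Phi)$; exactness at the other terms means $inc$ is injective and $\ker\Pi=\mathrm{Aut}^{\mathcal L,\mathcal H}_{\mathcal H}(\mathcal E_{\mathcal R})$. *)

theory Defs
  imports Complex_Main
begin

text \<open>The lambda-bracket [a_lambda b] is stored by its coefficients:
  lbr A a b n is the coefficient of lambda^n (finitely many nonzero).\<close>

record 'a lca =
  scal :: "complex \<Rightarrow> 'a \<Rightarrow> 'a"
  der  :: "'a \<Rightarrow> 'a"
  lbr  :: "'a \<Rightarrow> 'a \<Rightarrow> nat \<Rightarrow> 'a"

record 'a nlca = "'a lca" +
  nij :: "'a \<Rightarrow> 'a"

text \<open>With T = (x *) this is ordinary evaluation at x;
  with T = (- d - x) it is the substitution lambda := -d - x.\<close>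
definition opev :: "('a::ab_group_add \<Rightarrow> 'a) \<Rightarrow> (nat \<Rightarrow> 'a) \<Rightarrow> 'a" where
  "opev T c = (\<Sum>n\<in>{n. c n \<noteq> 0}. (T ^^ n) (c n))"

definition lb :: "('a::ab_group_add, 'z) lca_scheme \<Rightarrow> 'a \<Rightarrow> 'a \<Rightarrow> complex \<Rightarrow> 'a" where
  "lb A a b x = opev (scal A x) (lbr A a b)"

definition lbD :: "('a::ab_group_add, 'z) lca_scheme \<Rightarrow> 'a \<Rightarrow> 'a \<Rightarrow> complex \<Rightarrow> 'a" where
  "lbD A a b x = opev (\<lambda>v. - der A v - scal A x v) (lbr A a b)"

definition cmod :: "('a::ab_group_add, 'z) lca_scheme \<Rightarrow> bool" where
  "cmod A \<longleftrightarrow> vector_space (scal A) \<and> Vector_Spaces.linear (scal A) (scal A) (der A)"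

definition dlinear :: "('a::ab_group_add, 'z) lca_scheme \<Rightarrow> ('b::ab_group_add, 'y) lca_scheme
    \<Rightarrow> ('a \<Rightarrow> 'b) \<Rightarrow> bool" where
  "dlinear A B f \<longleftrightarrow> Vector_Spaces.linear (scal A) (scal B) f \<and> (\<forall>a. f (der A a) = der B (f a))"

definition is_lca :: "('a::ab_group_add, 'z) lca_scheme \<Rightarrow> bool" where
  "is_lca A \<longleftrightarrow> cmod A
    \<and> (\<forall>a b. finite {n. lbr A a b n \<noteq> 0})
    \<and> (\<forall>b n. Vector_Spaces.linear (scal A) (scal A) (\<lambda>a. lbr A a b n))
    \<and> (\<forall>a n. Vector_Spaces.linear (scal A) (scal A) (\<lambda>b. lbr A a b n))
    \<and> (\<forall>a b x. lb A (der A a) b x = - scal A x (lb A a b x))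
    \<and> (\<forall>a b x. lb A a (der A b) x = der A (lb A a b x) + scal A x (lb A a b x))
    \<and> (\<forall>a b x. lb A a b x = - lbD A b a x)
    \<and> (\<forall>a b c x y. lb A a (lb A b c y) x = lb A (lb A a b x) c (x + y) + lb A b (lb A a c x) y)"

definition is_nlca :: "('a::ab_group_add, 'z) nlca_scheme \<Rightarrow> bool" where
  "is_nlca A \<longleftrightarrow> is_lca A \<and> dlinear A A (nij A)
    \<and> (\<forall>p q n. lbr A (nij A p) (nij A q) n
          = nij A (lbr A (nij A p) q n + lbr A p (nij A q) n - nij A (lbr A p q n)))"

definition morph :: "('a::ab_group_add, 'z) nlca_scheme \<Rightarrow> ('b::ab_group_add, 'y) nlca_scheme
    \<Rightarrow> ('a \<Rightarrow> 'b) \<Rightarrow> bool" where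
  "morph A B f \<longleftrightarrow> dlinear A B f
    \<and> (\<forall>a b n. f (lbr A a b n) = lbr B (f a) (f b) n)
    \<and> (\<forall>a. f (nij A a) = nij B (f a))"

definition Aut :: "('a::ab_group_add, 'z) nlca_scheme \<Rightarrow> ('a \<Rightarrow> 'a) set" where
  "Aut A = {f. morph A A f \<and> bij f}"

text \<open>Non-abelian extension 0 -> H -> E -> L -> 0 (splitting as C[d]-modules
  is expressed separately by a C[d]-linear section)\<close>
definition nab_extension :: "('h::ab_group_add) nlca \<Rightarrow> ('e::ab_group_add) nlca
    \<Rightarrow> ('l::ab_group_add) nlca \<Rightarrow> ('h \<Rightarrow> 'e) \<Rightarrow> ('e \<Rightarrow> 'l) \<Rightarrow> bool" where
  "nab_extension H E L inc proj \<longleftrightarrow> is_nlca H \<and> is_nlca E \<and> is_nlca L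
    \<and> morph H E inc \<and> morph E L proj \<and> inj inc \<and> surj proj
    \<and> range inc = {e. proj e = 0}"

definition cev :: "('h::ab_group_add, 'z) lca_scheme \<Rightarrow> ('l \<Rightarrow> 'l \<Rightarrow> nat \<Rightarrow> 'h)
    \<Rightarrow> 'l \<Rightarrow> 'l \<Rightarrow> complex \<Rightarrow> 'h" where
  "cev H chi p q x = opev (scal H x) (chi p q)"

definition rev :: "('h::ab_group_add, 'z) lca_scheme \<Rightarrow> ('l \<Rightarrow> 'h \<Rightarrow> nat \<Rightarrow> 'h)
    \<Rightarrow> 'l \<Rightarrow> 'h \<Rightarrow> complex \<Rightarrow> 'h" where
  "rev H rho p h x = opev (scal H x) (rho p h)"

definition revD :: "('h::ab_group_add, 'z) lca_scheme \<Rightarrow> ('l \<Rightarrow> 'h \<Rightarrow> nat \<Rightarrow> 'h)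
    \<Rightarrow> 'l \<Rightarrow> 'h \<Rightarrow> complex \<Rightarrow> 'h" where
  "revD H rho p h x = opev (\<lambda>v. - der H v - scal H x v) (rho p h)"

definition nab_equiv :: "('l::ab_group_add) nlca \<Rightarrow> ('h::ab_group_add) nlca
    \<Rightarrow> ('l \<Rightarrow> 'l \<Rightarrow> nat \<Rightarrow> 'h) \<Rightarrow> ('l \<Rightarrow> 'h \<Rightarrow> nat \<Rightarrow> 'h) \<Rightarrow> ('l \<Rightarrow> 'h)
    \<Rightarrow> ('l \<Rightarrow> 'l \<Rightarrow> nat \<Rightarrow> 'h) \<Rightarrow> ('l \<Rightarrow> 'h \<Rightarrow> nat \<Rightarrow> 'h) \<Rightarrow> ('l \<Rightarrow> 'h) \<Rightarrow> bool" where
  "nab_equiv L H chi rho Phi chi' rho' Phi' \<longleftrightarrow>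
    (\<exists>\<tau>. dlinear L H \<tau>
      \<and> (\<forall>p h x. rev H rho p h x - rev H rho' p h x = lb H (\<tau> p) h x)
      \<and> (\<forall>p q x. cev H chi p q x - cev H chi' p q x
            = lb H (\<tau> p) (\<tau> q) x - \<tau> (lb L p q x) + rev H rho' p (\<tau> q) x - revD H rho' q (\<tau> p) x)
      \<and> (\<forall>p. Phi p - Phi' p = nij H (\<tau> p) - \<tau> (nij L p)))"

definition AutH :: "('e::ab_group_add) nlca \<Rightarrow> ('h \<Rightarrow> 'e) \<Rightarrow> ('e \<Rightarrow> 'e) set" where
  "AutH E inc = {\<gamma> \<in> Aut E. \<gamma> ` range inc = range inc}"

definition PiMap :: "('h \<Rightarrow> 'e) \<Rightarrow> ('e \<Rightarrow> 'l) \<Rightarrow> ('l \<Rightarrow> 'e) \<Rightarrow> ('e \<Rightarrow> 'e)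
    \<Rightarrow> ('h \<Rightarrow> 'h) \<times> ('l \<Rightarrow> 'l)" where
  "PiMap inc proj s \<gamma> = (inv inc \<circ> \<gamma> \<circ> inc, proj \<circ> \<gamma> \<circ> s)"

definition AutLH :: "('e::ab_group_add) nlca \<Rightarrow> ('h \<Rightarrow> 'e) \<Rightarrow> ('e \<Rightarrow> 'l) \<Rightarrow> ('l \<Rightarrow> 'e)
    \<Rightarrow> ('e \<Rightarrow> 'e) set" where
  "AutLH E inc proj s = {\<gamma> \<in> AutH E inc. PiMap inc proj s \<gamma> = (id, id)}"

end

theory Submission
  imports Defs
begin


lemma funpow_commute:
  assumes "\<And>v. f (T v) = T' (f v)"
  shows "f ((T ^^ n) v) = (T' ^^ n) (f v)"
  by (induction n) (simp_all add: assms)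

lemma funpow_zero:
  fixes T :: "'a::ab_group_add \<Rightarrow> 'a"
  assumes "T 0 = 0"
  shows "(T ^^ n) 0 = 0"
  by (induction n) (simp_all add: assms)

lemma opev_eq_sum:
  fixes c :: "nat \<Rightarrow> 'a::ab_group_add"
  assumes "finite S" "{n. c n \<noteq> 0} \<subseteq> S" "T 0 = 0"
  shows "opev T c = (\<Sum>n\<in>S. (T ^^ n) (c n))"
  unfolding opev_def
  by (rule sum.mono_neutral_left) (use assms funpow_zero[of T] in auto)

lemma additive_zero:
  fixes f :: "'a::ab_group_add \<Rightarrow> 'b::ab_group_add"
  assumes "\<And>a b. f (a + b) = f a + f b"
  shows "f 0 = 0"
  using assms[of 0 0] by simp

lemma opev_map:
  fixes f :: "'a::ab_group_add \<Rightarrow> 'b::ab_group_add"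
  assumes add: "\<And>a b. f (a + b) = f a + f b"
    and comm: "\<And>v. f (T v) = T' (f v)"
    and fin: "finite {n. c n \<noteq> 0}" and T0: "T 0 = 0" and T'0: "T' 0 = 0"
  shows "f (opev T c) = opev T' (\<lambda>n. f (c n))"
proof -
  have f0: "f 0 = 0" by (rule additive_zero[OF add])
  have "opev T' (\<lambda>n. f (c n)) = (\<Sum>n\<in>{n. c n \<noteq> 0}. (T' ^^ n) (f (c n)))"
    by (rule opev_eq_sum) (auto simp: f0 fin T'0)
  also have "\<dots> = (\<Sum>n\<in>{n. c n \<noteq> 0}. f ((T ^^ n) (c n)))"
    by (simp add: funpow_commute[of f T T', OF comm])
  also have "\<dots> = f (opev T c)"
    unfolding opev_def using sum_comp_morphism[of f "\<lambda>n. (T ^^ n) (c n)", OF f0 add]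
    by (simp add: o_def)
  finally show ?thesis by simp
qed

lemma funpow_add:
  fixes T :: "'a::ab_group_add \<Rightarrow> 'a"
  assumes "\<And>a b. T (a + b) = T a + T b"
  shows "(T ^^ n) (a + b) = (T ^^ n) a + (T ^^ n) b"
  by (induction n) (simp_all add: assms)

lemma opev_add:
  fixes c d :: "nat \<Rightarrow> 'a::ab_group_add"
  assumes add: "\<And>a b. T (a + b) = T a + T b"
    and fc: "finite {n. c n \<noteq> 0}" and fd: "finite {n. d n \<noteq> 0}"
  shows "opev T (\<lambda>n. c n + d n) = opev T c + opev T d"
proof -
  have T0: "T 0 = 0" by (rule additive_zero[OF add])
  let ?S = "{n. c n \<noteq> 0} \<union> {n. d n \<noteq> 0}"
  have "opev T (\<lambda>n. c n + d n) = (\<Sum>n\<in>?S. (T ^^ n) (c n + d n))"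
    by (rule opev_eq_sum) (use fc fd T0 in auto)
  also have "\<dots> = (\<Sum>n\<in>?S. (T ^^ n) (c n)) + (\<Sum>n\<in>?S. (T ^^ n) (d n))"
    by (simp add: funpow_add[OF add] sum.distrib)
  also have "\<dots> = opev T c + opev T d"
  proof -
    have "opev T c = (\<Sum>n\<in>?S. (T ^^ n) (c n))" by (rule opev_eq_sum) (use fc fd T0 in auto)
    moreover have "opev T d = (\<Sum>n\<in>?S. (T ^^ n) (d n))" by (rule opev_eq_sum) (use fc fd T0 in auto)
    ultimately show ?thesis by simp
  qed
  finally show ?thesis .
qed

lemma funpow_scale:
  assumes "vector_space sc"
  shows "((sc x) ^^ n) v = sc (x ^ n) v"
proof -
  interpret vs: vector_space sc by fact
  show ?thesis by (induction n) (simp_all add: mult.commute)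
qed

lemma opev_coeff_unique:
  fixes sc :: "complex \<Rightarrow> 'b::ab_group_add \<Rightarrow> 'b"
  assumes vs: "vector_space sc"
    and fc: "finite {n. c n \<noteq> 0}" and fd: "finite {n. d n \<noteq> 0}"
    and eq: "\<And>x. opev (sc x) c = opev (sc x) d"
  shows "c = d"
proof -
  interpret vs: vector_space sc by fact
  obtain B where B: "vs.independent B" "UNIV \<subseteq> vs.span B"
    using vs.basis_exists[of UNIV] by blast
  let ?S = "{n. c n \<noteq> 0} \<union> {n. d n \<noteq> 0}"
  have finS: "finite ?S" using fc fd by auto
  define N where "N = Max ?S"
  have N: "\<And>n. n \<in> ?S \<Longrightarrow> n \<le> N"
    unfolding N_def by (rule Max_ge[OF finS])
  have sub: "?S \<subseteq> {..N}" using N by auto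
  have ev: "opev (sc x) e = (\<Sum>n\<le>N. sc (x ^ n) (e n))" if "{n. e n \<noteq> 0} \<subseteq> ?S" for x e
    by (subst opev_eq_sum[of "{..N}"]) (use that sub in \<open>auto simp: funpow_scale[OF vs]\<close>)
  have inspan: "v \<in> vs.span B" for v using B by auto
  have rep: "vs.representation B (\<Sum>n\<le>N. sc (x ^ n) (e n)) b = (\<Sum>n\<le>N. vs.representation B (e n) b * x ^ n)" for x e b
    by (simp add: vs.representation_sum[OF B(1)] inspan vs.representation_scale[OF B(1) inspan] mult.commute)
  have R: "\<forall>n\<le>N. vs.representation B (c n) b = vs.representation B (d n) b" for b
  proof -
    have "\<forall>x. (\<Sum>n\<le>N. vs.representation B (c n) b * x ^ n) = (\<Sum>n\<le>N. vs.representation B (d n) b * x ^ n)"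
    proof
      fix x :: complex
      have "opev (sc x) c = opev (sc x) d" by (rule eq)
      then have "(\<Sum>n\<le>N. sc (x ^ n) (c n)) = (\<Sum>n\<le>N. sc (x ^ n) (d n))"
        by (simp add: ev)
      then show "(\<Sum>n\<le>N. vs.representation B (c n) b * x ^ n) = (\<Sum>n\<le>N. vs.representation B (d n) b * x ^ n)"
        by (simp only: rep[symmetric])
    qed
    then show ?thesis by (rule polyfun_eq_coeffs[THEN iffD1])
  qed
  show ?thesis
  proof
    fix n
    show "c n = d n"
    proof (cases "n \<le> N")
      case True
      have h: "vs.representation B (c n) = vs.representation B (d n)" using R True by auto
      have "c n = (\<Sum>b | vs.representation B (c n) b \<noteq> 0. sc (vs.representation B (c n) b) b)"
        by (rule sym[OF vs.sum_nonzero_representation_eq[OF B(1) inspan]])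
      also have "\<dots> = (\<Sum>b | vs.representation B (d n) b \<noteq> 0. sc (vs.representation B (d n) b) b)"
        by (simp only: h)
      also have "\<dots> = d n"
        by (rule vs.sum_nonzero_representation_eq[OF B(1) inspan])
      finally show ?thesis .
    next
      case False
      then have "n \<notin> ?S" using N by (meson)
      then show ?thesis by simp
    qed
  qed
qed


lemma dlin:
  assumes "dlinear A B f"
  shows dlin_add: "f (a + b) = f a + f b"
    and dlin_scal: "f (scal A c a) = scal B c (f a)"
    and dlin_der: "f (der A a) = der B (f a)"
    and dlin_zero: "f 0 = 0"
    and dlin_neg: "f (- a) = - f a"
    and dlin_diff: "f (a - b) = f a - f b"
    and dlin_vs1: "vector_space (scal A)"
    and dlin_vs2: "vector_space (scal B)"
proof -
  have l: "Vector_Spaces.linear (scal A) (scal B) f" and d: "\<And>a. f (der A a) = der B (f a)"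
    using assms unfolding dlinear_def by auto
  interpret Vector_Spaces.linear "scal A" "scal B" f by (rule l)
  show "f (a + b) = f a + f b" by (rule add)
  show "f (scal A c a) = scal B c (f a)" by (rule scale)
  show "f (der A a) = der B (f a)" by (rule d)
  show "f 0 = 0" by simp
  show "f (- a) = - f a" by (rule neg)
  show "f (a - b) = f a - f b" by (rule diff)
  show "vector_space (scal A)" by unfold_locales
  show "vector_space (scal B)" by unfold_locales
qed

lemma is_lca_facts:
  assumes "is_lca A"
  shows lca_vs: "vector_space (scal A)"
    and lca_der: "dlinear A A (der A)"
    and lca_fin: "finite {n. lbr A a b n \<noteq> 0}"
    and lca_addl: "lbr A (a1 + a2) b n = lbr A a1 b n + lbr A a2 b n"
    and lca_addr: "lbr A a (b1 + b2) n = lbr A a b1 n + lbr A a b2 n"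
    and lca_skew: "lb A a b x = - lbD A b a x"
proof -
  from assms have c: "cmod A" by (simp add: is_lca_def)
  then show vs: "vector_space (scal A)" by (simp add: cmod_def)
  show "dlinear A A (der A)" using c by (simp add: cmod_def dlinear_def)
  show "finite {n. lbr A a b n \<noteq> 0}" using assms by (simp add: is_lca_def)
  have "Vector_Spaces.linear (scal A) (scal A) (\<lambda>a. lbr A a b n)" using assms by (simp add: is_lca_def)
  then show "lbr A (a1 + a2) b n = lbr A a1 b n + lbr A a2 b n" by (simp add: Vector_Spaces.linear_iff)
  have "Vector_Spaces.linear (scal A) (scal A) (\<lambda>b. lbr A a b n)" using assms by (simp add: is_lca_def)
  then show "lbr A a (b1 + b2) n = lbr A a b1 n + lbr A a b2 n" by (simp add: Vector_Spaces.linear_iff)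
  show "lb A a b x = - lbD A b a x" using assms by (simp add: is_lca_def)
qed

lemma vs_scal_zero:
  assumes "vector_space sc" shows "sc x 0 = 0"
proof -
  interpret vector_space sc by fact
  show ?thesis by simp
qed

lemma vs_scal_add:
  assumes "vector_space sc" shows "sc x (a + b) = sc x a + sc x b"
proof -
  interpret vector_space sc by fact
  show ?thesis by (simp add: scale_right_distrib)
qed

lemma lin_opev:
  assumes f: "dlinear A B f" and fin: "finite {n. c n \<noteq> 0}"
  shows "f (opev (scal A x) c) = opev (scal B x) (\<lambda>n. f (c n))"
  by (rule opev_map) (use f fin in \<open>auto simp: dlin_add[OF f] dlin_scal[OF f]
      vs_scal_zero[OF dlin_vs1[OF f]] vs_scal_zero[OF dlin_vs2[OF f]]\<close>)

lemma lin_opevD: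
  assumes f: "dlinear A B f" and dA: "dlinear A A (der A)" and dB: "dlinear B B (der B)"
    and fin: "finite {n. c n \<noteq> 0}"
  shows "f (opev (\<lambda>v. - der A v - scal A x v) c) = opev (\<lambda>v. - der B v - scal B x v) (\<lambda>n. f (c n))"
  by (rule opev_map) (use f fin in \<open>auto simp: dlin_add[OF f] dlin_scal[OF f] dlin_diff[OF f]
      dlin_neg[OF f] dlin_der[OF f] dlin_zero[OF dA] dlin_zero[OF dB]
      vs_scal_zero[OF dlin_vs1[OF f]] vs_scal_zero[OF dlin_vs2[OF f]]\<close>)

lemma lb_addl:
  assumes "is_lca A"
  shows "lb A (a1 + a2) b x = lb A a1 b x + lb A a2 b x"
  unfolding lb_def lca_addl[OF assms]
  by (rule opev_add) (auto simp: lca_fin[OF assms] vs_scal_add[OF lca_vs[OF assms]])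

lemma lb_addr:
  assumes "is_lca A"
  shows "lb A a (b1 + b2) x = lb A a b1 x + lb A a b2 x"
  unfolding lb_def lca_addr[OF assms]
  by (rule opev_add) (auto simp: lca_fin[OF assms] vs_scal_add[OF lca_vs[OF assms]])

lemma fin_map:
  assumes "finite {n. c n \<noteq> 0}" and "f 0 = 0"
  shows "finite {n. f (c n) \<noteq> 0}"
  by (rule finite_subset[OF _ assms(1)]) (use assms(2) in auto)

lemma morph_lb:
  assumes A: "is_lca A" and f: "dlinear A B f" and br: "\<And>n. f (lbr A a b n) = lbr B (f a) (f b) n"
  shows "f (lb A a b x) = lb B (f a) (f b) x"
  unfolding lb_def by (simp add: lin_opev[OF f lca_fin[OF A]] br)

lemma morph_lbD:
  assumes A: "is_lca A" and B: "is_lca B" and f: "dlinear A B f" and br: "\<And>n. f (lbr A a b n) = lbr B (f a) (f b) n"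
  shows "f (lbD A a b x) = lbD B (f a) (f b) x"
  unfolding lbD_def by (simp add: lin_opevD[OF f lca_der[OF A] lca_der[OF B] lca_fin[OF A]] br)

lemma coeff_from_eval:
  assumes A: "is_lca A" and f: "dlinear A A f" and ev: "\<And>x. f (lb A a b x) = lb A (f a) (f b) x"
  shows "f (lbr A a b n) = lbr A (f a) (f b) n"
proof -
  have "(\<lambda>n. f (lbr A a b n)) = lbr A (f a) (f b)"
  proof (rule opev_coeff_unique[OF lca_vs[OF A]])
    show "finite {n. f (lbr A a b n) \<noteq> 0}" by (rule fin_map[of "lbr A a b" f, OF lca_fin[OF A] dlin_zero[OF f]])
    show "finite {n. lbr A (f a) (f b) n \<noteq> 0}" by (rule lca_fin[OF A])
    fix x
    show "opev (scal A x) (\<lambda>n. f (lbr A a b n)) = opev (scal A x) (lbr A (f a) (f b))"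
      using ev[of x] unfolding lb_def by (simp add: lin_opev[OF f lca_fin[OF A]])
  qed
  then show ?thesis by (rule fun_cong)
qed

lemma skew_coeff:
  assumes A: "is_lca A" and f: "dlinear A A f" and br: "\<And>n. f (lbr A a b n) = lbr A (f a) (f b) n"
  shows "f (lbr A b a n) = lbr A (f b) (f a) n"
proof (rule coeff_from_eval[OF A f])
  fix x
  show "f (lb A b a x) = lb A (f b) (f a) x"
    by (simp add: lca_skew[OF A, of b a] lca_skew[OF A, of "f b" "f a"] dlin_neg[OF f]
        morph_lbD[OF A A f br])
qed


lemma dlin_comp:
  assumes f: "dlinear A B f" and g: "dlinear B C g"
  shows "dlinear A C (\<lambda>x. g (f x))"
  using assms unfolding dlinear_def
  using Vector_Spaces.linear_compose[of "scal A" "scal B" f "scal C" g] by (auto simp: o_def)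

lemma dlin_plus:
  assumes f: "dlinear A B f" and g: "dlinear A B g" and dB: "dlinear B B (der B)"
  shows "dlinear A B (\<lambda>x. f x + g x)"
  unfolding dlinear_def Vector_Spaces.linear_iff
  using dlin_vs1[OF f] dlin_vs2[OF f] dlin_add[OF f] dlin_add[OF g] dlin_scal[OF f] dlin_scal[OF g]
    dlin_der[OF f] dlin_der[OF g] dlin_add[OF dB]
  by (auto simp: vs_scal_add[OF dlin_vs2[OF f]] algebra_simps)

lemma dlinI:
  assumes "vector_space (scal A)" "vector_space (scal B)"
    and "\<And>a b. f (a + b) = f a + f b" and "\<And>c a. f (scal A c a) = scal B c (f a)"
    and "\<And>a. f (der A a) = der B (f a)"
  shows "dlinear A B f"
  unfolding dlinear_def Vector_Spaces.linear_iff using assms by auto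

lemma dlin_inv:
  assumes f: "dlinear A A f" and b: "bij f"
  shows "dlinear A A (inv f)"
proof (rule dlinI[OF dlin_vs1[OF f] dlin_vs1[OF f]])
  have inj: "inj f" and ff: "\<And>y. f (inv f y) = y" using b by (auto simp: bij_def surj_f_inv_f)
  show "inv f (a + b) = inv f a + inv f b" for a b
    by (rule injD[OF inj]) (simp add: ff dlin_add[OF f])
  show "inv f (scal A c a) = scal A c (inv f a)" for c a
    by (rule injD[OF inj]) (simp add: ff dlin_scal[OF f])
  show "inv f (der A a) = der A (inv f a)" for a
    by (rule injD[OF inj]) (simp add: ff dlin_der[OF f])
qed




lemma vs_scal_diff:
  assumes "vector_space sc" shows "sc x (a - b) = sc x a - sc x b"
proof -
  interpret vector_space sc by fact
  show ?thesis by (simp add: scale_right_diff_distrib)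
qed

locale nabx =
  fixes H :: "('h::ab_group_add) nlca" and E :: "('e::ab_group_add) nlca"
    and L :: "('l::ab_group_add) nlca"
    and inc :: "'h \<Rightarrow> 'e" and proj :: "'e \<Rightarrow> 'l" and s :: "'l \<Rightarrow> 'e"
    and chi :: "'l \<Rightarrow> 'l \<Rightarrow> nat \<Rightarrow> 'h" and rho :: "'l \<Rightarrow> 'h \<Rightarrow> nat \<Rightarrow> 'h"
    and Phi :: "'l \<Rightarrow> 'h"
  assumes ext: "nab_extension H E L inc proj"
    and s_lin: "dlinear L E s"
    and s_sec: "\<forall>p. proj (s p) = p"
    and chi_def: "\<forall>p q n. inc (chi p q n) = lbr E (s p) (s q) n - s (lbr L p q n)"
    and rho_def: "\<forall>p h n. inc (rho p h n) = lbr E (s p) (inc h) n"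
    and Phi_def: "\<forall>p. inc (Phi p) = nij E (s p) - s (nij L p)"
begin

lemma nH: "is_nlca H" and nE: "is_nlca E" and nL: "is_nlca L"
  and incm: "morph H E inc" and projm: "morph E L proj"
  and incinj: "inj inc" and projsurj: "surj proj"
  and ker: "range inc = {e. proj e = 0}"
  using ext unfolding nab_extension_def by auto

lemma lH: "is_lca H" and lE: "is_lca E" and lL: "is_lca L"
  using nH nE nL by (auto simp: is_nlca_def)

lemma nijH: "dlinear H H (nij H)" and nijE: "dlinear E E (nij E)" and nijL: "dlinear L L (nij L)"
  using nH nE nL by (auto simp: is_nlca_def)

lemma incd: "dlinear H E inc" and projd: "dlinear E L proj"
  using incm projm by (auto simp: morph_def)

lemma inc_lbr: "inc (lbr H a b n) = lbr E (inc a) (inc b) n"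
  and inc_nij: "inc (nij H a) = nij E (inc a)"
  and proj_lbr: "proj (lbr E a' b' n) = lbr L (proj a') (proj b') n"
  and proj_nij: "proj (nij E a') = nij L (proj a')"
  using incm projm by (auto simp: morph_def)

lemma inc_eq: "inc a = inc b \<longleftrightarrow> a = b"
  using incinj by (auto dest: injD)

lemma proj_inc[simp]: "proj (inc h) = 0"
  using ker by auto

lemma ps[simp]: "proj (s p) = p" using s_sec by auto

lemma ker_ex: "proj e = 0 \<Longrightarrow> inc (inv inc e) = e"
  using ker by (auto intro: f_inv_into_f)

lemma inc_inv_inc[simp]: "inv inc (inc h) = h"
  using incinj by (simp add: inv_f_f)

definition pi :: "'e \<Rightarrow> 'h" where "pi e = inv inc (e - s (proj e))"

lemma inc_pi: "inc (pi e) = e - s (proj e)"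
  unfolding pi_def by (rule ker_ex) (simp add: dlin_diff[OF projd])

lemma decomp: "e = s (proj e) + inc (pi e)"
  by (simp add: inc_pi)

lemma pid: "dlinear E H pi"
proof (rule dlinI[OF lca_vs[OF lE] lca_vs[OF lH]])
  note simps = inc_pi dlin_add[OF incd] dlin_scal[OF incd] dlin_der[OF incd]
     dlin_add[OF projd] dlin_scal[OF projd] dlin_der[OF projd]
     dlin_add[OF s_lin] dlin_scal[OF s_lin] dlin_der[OF s_lin]
  show "pi (a + b) = pi a + pi b" for a b
    by (rule injD[OF incinj]) (simp add: simps)
  show "pi (scal E c a) = scal H c (pi a)" for c a
    by (rule injD[OF incinj]) (simp add: simps vs_scal_diff[OF lca_vs[OF lE]])
  show "pi (der E a) = der H (pi a)" for a
    by (rule injD[OF incinj]) (simp add: simps dlin_diff[OF lca_der[OF lE]])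
qed

lemma pi_s[simp]: "pi (s p) = 0"
  by (rule injD[OF incinj]) (simp add: inc_pi dlin_zero[OF incd])

lemma pi_inc[simp]: "pi (inc h) = h"
  by (rule injD[OF incinj]) (simp add: inc_pi dlin_zero[OF s_lin])

lemma fin_rho: "finite {n. rho p h n \<noteq> 0}"
proof -
  have "{n. rho p h n \<noteq> 0} = {n. lbr E (s p) (inc h) n \<noteq> 0}"
  proof (rule Collect_cong)
    fix n
    have "rho p h n = 0 \<longleftrightarrow> inc (rho p h n) = inc 0" by (simp only: inc_eq)
    then show "rho p h n \<noteq> 0 \<longleftrightarrow> lbr E (s p) (inc h) n \<noteq> 0"
      using rho_def dlin_zero[OF incd] by simp
  qed
  then show ?thesis using lca_fin[OF lE] by simp
qed

lemma fin_chi: "finite {n. chi p q n \<noteq> 0}"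
proof (rule finite_subset[OF _ finite_UnI[OF lca_fin[OF lE, of "s p" "s q"] lca_fin[OF lL, of p q]]])
  show "{n. chi p q n \<noteq> 0} \<subseteq> {n. lbr E (s p) (s q) n \<noteq> 0} \<union> {n. lbr L p q n \<noteq> 0}"
  proof
    fix n assume "n \<in> {n. chi p q n \<noteq> 0}"
    moreover have "chi p q n = 0 \<longleftrightarrow> inc (chi p q n) = inc 0" by (simp only: inc_eq)
    ultimately have "inc (chi p q n) \<noteq> 0" using dlin_zero[OF incd] by simp
    then show "n \<in> {n. lbr E (s p) (s q) n \<noteq> 0} \<union> {n. lbr L p q n \<noteq> 0}"
      using chi_def dlin_zero[OF s_lin] by auto
  qed
qed

lemma E_rho: "inc (rev H rho p h x) = lb E (s p) (inc h) x"
  unfolding rev_def lb_def by (simp add: lin_opev[OF incd fin_rho] rho_def)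

lemma E_rhoD: "inc (revD H rho p h x) = lbD E (s p) (inc h) x"
  unfolding revD_def lbD_def
  by (simp add: lin_opevD[OF incd lca_der[OF lH] lca_der[OF lE] fin_rho] rho_def)

lemma E_chi: "lb E (s p) (s q) x = inc (cev H chi p q x) + s (lb L p q x)"
proof -
  have e: "lbr E (s p) (s q) = (\<lambda>n. inc (chi p q n) + s (lbr L p q n))"
    using chi_def by auto
  have "lb E (s p) (s q) x = opev (scal E x) (\<lambda>n. inc (chi p q n) + s (lbr L p q n))"
    unfolding lb_def e ..
  also have "\<dots> = opev (scal E x) (\<lambda>n. inc (chi p q n)) + opev (scal E x) (\<lambda>n. s (lbr L p q n))"
    by (rule opev_add[OF vs_scal_add[OF lca_vs[OF lE]] fin_map[of "chi p q" inc, OF fin_chi dlin_zero[OF incd]]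
        fin_map[of "lbr L p q" s, OF lca_fin[OF lL] dlin_zero[OF s_lin]]])
  also have "\<dots> = inc (cev H chi p q x) + s (lb L p q x)"
  proof -
    have 1: "inc (cev H chi p q x) = opev (scal E x) (\<lambda>n. inc (chi p q n))"
      unfolding cev_def by (rule lin_opev[OF incd fin_chi])
    have 2: "s (lb L p q x) = opev (scal E x) (\<lambda>n. s (lbr L p q n))"
      unfolding lb_def by (rule lin_opev[OF s_lin lca_fin[OF lL]])
    show ?thesis unfolding 1 2 ..
  qed
  finally show ?thesis .
qed

lemma E_inc_lb: "inc (lb H a b x) = lb E (inc a) (inc b) x"
  by (rule morph_lb[OF lH incd inc_lbr])

lemma E_inc_s: "lb E (inc h) (s q) x = - inc (revD H rho q h x)"
  unfolding lca_skew[OF lE, of "inc h"] E_rhoD ..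

lemma twist_rev:
  assumes "dlinear H H a"
  shows "rev H (\<lambda>p h n. a (rho (f p) (g h) n)) p h x = a (rev H rho (f p) (g h) x)"
  unfolding rev_def by (rule sym, rule lin_opev[OF assms fin_rho])

lemma twist_cev:
  assumes "dlinear H H a"
  shows "cev H (\<lambda>p q n. a (chi (f p) (f q) n)) p q x = a (cev H chi (f p) (f q) x)"
  unfolding cev_def by (rule sym, rule lin_opev[OF assms fin_chi])

end


context nabx
begin




lemma part1:
  assumes g: "\<gamma> \<in> AutH E inc"
  shows "PiMap inc proj s \<gamma> \<in> {(\<alpha>, \<beta>). \<alpha> \<in> Aut H \<and> \<beta> \<in> Aut L
           \<and> nab_equiv L H
               (\<lambda>p q n. \<alpha> (chi (inv \<beta> p) (inv \<beta> q) n))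
               (\<lambda>p h n. \<alpha> (rho (inv \<beta> p) (inv \<alpha> h) n))
               (\<lambda>p. \<alpha> (Phi (inv \<beta> p)))
               chi rho Phi}"
proof -
  have gm: "morph E E \<gamma>" and gb: "bij \<gamma>" and gr: "\<gamma> ` range inc = range inc"
    using g by (auto simp: AutH_def Aut_def)
  have gd: "dlinear E E \<gamma>" and g_lbr: "\<And>a b n. \<gamma> (lbr E a b n) = lbr E (\<gamma> a) (\<gamma> b) n"
    and g_nij: "\<And>a. \<gamma> (nij E a) = nij E (\<gamma> a)" using gm by (auto simp: morph_def)
  have ginj: "inj \<gamma>" and gsurj: "surj \<gamma>" using gb by (auto simp: bij_def)
  define \<alpha> where "\<alpha> = inv inc \<circ> \<gamma> \<circ> inc"
  define \<beta> where "\<beta> = proj \<circ> \<gamma> \<circ> s"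
  have inc_a: "inc (\<alpha> h) = \<gamma> (inc h)" for h
  proof -
    have "\<gamma> (inc h) \<in> range inc" using gr by auto
    then show ?thesis by (simp add: \<alpha>_def f_inv_into_f)
  qed
  have bdef: "\<beta> p = proj (\<gamma> (s p))" for p by (simp add: \<beta>_def)
  have pg: "proj (\<gamma> e) = \<beta> (proj e)" for e
  proof -
    have "\<gamma> e = \<gamma> (s (proj e)) + \<gamma> (inc (pi e))"
      by (simp only: dlin_add[OF gd, symmetric] decomp[symmetric])
    then show ?thesis by (simp add: dlin_add[OF projd] inc_a[symmetric] bdef)
  qed
  note incs = dlin_add[OF incd] dlin_diff[OF incd] dlin_neg[OF incd] dlin_scal[OF incd] dlin_der[OF incd]
  note gs = dlin_add[OF gd] dlin_diff[OF gd] dlin_neg[OF gd] dlin_scal[OF gd] dlin_der[OF gd]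
  have ad: "dlinear H H \<alpha>"
  proof (rule dlinI[OF lca_vs[OF lH] lca_vs[OF lH]])
    show "\<alpha> (a + b) = \<alpha> a + \<alpha> b" for a b by (rule injD[OF incinj]) (simp add: inc_a incs gs)
    show "\<alpha> (scal H c a) = scal H c (\<alpha> a)" for c a by (rule injD[OF incinj]) (simp add: inc_a incs gs)
    show "\<alpha> (der H a) = der H (\<alpha> a)" for a by (rule injD[OF incinj]) (simp add: inc_a incs gs)
  qed
  have a_lbr: "\<alpha> (lbr H a b n) = lbr H (\<alpha> a) (\<alpha> b) n" for a b n
    by (rule injD[OF incinj]) (simp add: inc_a inc_lbr g_lbr)
  have a_nij: "\<alpha> (nij H a) = nij H (\<alpha> a)" for a
    by (rule injD[OF incinj]) (simp add: inc_a inc_nij g_nij)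
  have a_inj: "inj \<alpha>"
  proof (rule injI)
    fix a b assume "\<alpha> a = \<alpha> b"
    then have "\<gamma> (inc a) = \<gamma> (inc b)" by (simp add: inc_a[symmetric])
    then have "inc a = inc b" by (rule injD[OF ginj])
    then show "a = b" by (rule injD[OF incinj])
  qed
  have a_surj: "surj \<alpha>"
  proof (rule surjI)
    fix k
    have "inc k \<in> \<gamma> ` range inc" using gr by auto
    then obtain h where "inc k = \<gamma> (inc h)" by auto
    then have "inc k = inc (\<alpha> h)" by (simp add: inc_a)
    then have "\<alpha> h = k" using incinj by (auto dest: injD)
    then show "\<alpha> (inv \<alpha> k) = k" by (metis f_inv_into_f rangeI)
  qed
  have bd: "dlinear L L \<beta>"
  proof -
    have "dlinear L L (\<lambda>p. proj (\<gamma> (s p)))"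
      by (rule dlin_comp[OF dlin_comp[OF s_lin gd] projd])
    then show ?thesis by (simp add: \<beta>_def o_def)
  qed
  have b_lbr: "\<beta> (lbr L p q n) = lbr L (\<beta> p) (\<beta> q) n" for p q n
  proof -
    have "s (lbr L p q n) = lbr E (s p) (s q) n - inc (chi p q n)" using chi_def by (simp add: algebra_simps)
    then show ?thesis
      by (simp add: bdef gs g_lbr dlin_diff[OF projd] proj_lbr inc_a[symmetric])
  qed
  have b_nij: "\<beta> (nij L p) = nij L (\<beta> p)" for p
  proof -
    have "s (nij L p) = nij E (s p) - inc (Phi p)" using Phi_def by (simp add: algebra_simps)
    then show ?thesis
      by (simp add: bdef gs g_nij dlin_diff[OF projd] proj_nij inc_a[symmetric])
  qed
  have b_inj: "inj \<beta>"
  proof (rule injI)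
    fix a b assume ab: "\<beta> a = \<beta> b"
    have "proj (\<gamma> (s (a - b))) = 0"
      using ab by (simp add: bdef[symmetric] dlin_diff[OF bd])
    then have "\<gamma> (s (a - b)) \<in> range inc" using ker by auto
    then have "\<gamma> (s (a - b)) \<in> \<gamma> ` range inc" using gr by simp
    then obtain h where "\<gamma> (s (a - b)) = \<gamma> (inc h)" by auto
    then have "s (a - b) = inc h" by (rule injD[OF ginj])
    then have "proj (s (a - b)) = 0" by simp
    then show "a = b" by simp
  qed
  have b_surj: "surj \<beta>"
  proof -
    have "q \<in> range \<beta>" for q
    proof -
      obtain e where e: "q = proj e" using projsurj by (metis surjD)
      obtain e' where e': "e = \<gamma> e'" using gsurj by (metis surjD)
      have "q = \<beta> (proj e')" using e e' pg by simp
      then show ?thesis by auto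
    qed
    then show ?thesis by auto
  qed
  have binv: "\<And>p. inv \<beta> (\<beta> p) = p" and binv2: "\<And>p. \<beta> (inv \<beta> p) = p"
    using b_inj b_surj by (auto simp: inv_f_f surj_f_inv_f)
  have ainv2: "\<And>h. \<alpha> (inv \<alpha> h) = h" using a_surj by (simp add: surj_f_inv_f)
  have ibd: "dlinear L L (inv \<beta>)" by (rule dlin_inv[OF bd]) (simp add: bij_def b_inj b_surj)
  have ib_lbr: "inv \<beta> (lbr L p q n) = lbr L (inv \<beta> p) (inv \<beta> q) n" for p q n
    by (rule injD[OF b_inj]) (simp add: binv2 b_lbr)
  have ib_nij: "inv \<beta> (nij L p) = nij L (inv \<beta> p)" for p
    by (rule injD[OF b_inj]) (simp add: binv2 b_nij)
  define \<tau> where "\<tau> p = inv inc (\<gamma> (s (inv \<beta> p)) - s p)" for p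
  have inc_t: "inc (\<tau> p) = \<gamma> (s (inv \<beta> p)) - s p" for p
    unfolding \<tau>_def by (rule ker_ex) (simp add: dlin_diff[OF projd] pg binv2)
  have g_s: "\<gamma> (s (inv \<beta> p)) = s p + inc (\<tau> p)" for p by (simp add: inc_t)
  have td: "dlinear L H \<tau>"
  proof (rule dlinI[OF lca_vs[OF lL] lca_vs[OF lH]])
    note ss = dlin_add[OF s_lin] dlin_scal[OF s_lin] dlin_der[OF s_lin]
      dlin_add[OF ibd] dlin_scal[OF ibd] dlin_der[OF ibd]
    show "\<tau> (a + b) = \<tau> a + \<tau> b" for a b by (rule injD[OF incinj]) (simp add: inc_t incs gs ss)
    show "\<tau> (scal L c a) = scal H c (\<tau> a)" for c a
      by (rule injD[OF incinj]) (simp add: inc_t incs gs ss vs_scal_diff[OF lca_vs[OF lE]])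
    show "\<tau> (der L a) = der H (\<tau> a)" for a
      by (rule injD[OF incinj]) (simp add: inc_t incs gs ss dlin_diff[OF lca_der[OF lE]])
  qed
  have gl: "\<gamma> (lb E a b x) = lb E (\<gamma> a) (\<gamma> b) x" for a b x by (rule morph_lb[OF lE gd g_lbr])
  have er: "rev H (\<lambda>p h n. \<alpha> (rho (inv \<beta> p) (inv \<alpha> h) n)) p h x - rev H rho p h x = lb H (\<tau> p) h x" for p h x
  proof (rule injD[OF incinj])
    have "inc (\<alpha> (rev H rho (inv \<beta> p) (inv \<alpha> h) x)) = lb E (s p + inc (\<tau> p)) (inc h) x"
      by (simp only: inc_a E_rho gl g_s) (simp only: inc_a[symmetric] ainv2)
    also have "\<dots> = inc (rev H rho p h x) + inc (lb H (\<tau> p) h x)"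
      by (simp only: lb_addl[OF lE] E_rho E_inc_lb)
    finally show "inc (rev H (\<lambda>p h n. \<alpha> (rho (inv \<beta> p) (inv \<alpha> h) n)) p h x - rev H rho p h x) = inc (lb H (\<tau> p) h x)"
      by (simp add: twist_rev[OF ad] incs)
  qed
  have ec: "cev H (\<lambda>p q n. \<alpha> (chi (inv \<beta> p) (inv \<beta> q) n)) p q x - cev H chi p q x
            = lb H (\<tau> p) (\<tau> q) x - \<tau> (lb L p q x) + rev H rho p (\<tau> q) x - revD H rho q (\<tau> p) x" for p q x
  proof (rule injD[OF incinj])
    have ibl: "inv \<beta> (lb L p q x) = lb L (inv \<beta> p) (inv \<beta> q) x" by (rule morph_lb[OF lL ibd ib_lbr])
    have ic: "inc (cev H chi a b x) = lb E (s a) (s b) x - s (lb L a b x)" for a b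
      by (simp add: E_chi)
    have "inc (\<alpha> (cev H chi (inv \<beta> p) (inv \<beta> q) x))
        = lb E (s p + inc (\<tau> p)) (s q + inc (\<tau> q)) x - (s (lb L p q x) + inc (\<tau> (lb L p q x)))"
      by (simp only: inc_a ic gs gl g_s ibl[symmetric])
    also have "\<dots> = inc (cev H chi p q x) + s (lb L p q x) + inc (rev H rho p (\<tau> q) x)
        + - inc (revD H rho q (\<tau> p) x) + inc (lb H (\<tau> p) (\<tau> q) x) - (s (lb L p q x) + inc (\<tau> (lb L p q x)))"
      by (simp only: lb_addl[OF lE] lb_addr[OF lE] E_chi E_rho E_inc_s E_inc_lb add.assoc) (simp add: ac_simps)
    finally show "inc (cev H (\<lambda>p q n. \<alpha> (chi (inv \<beta> p) (inv \<beta> q) n)) p q x - cev H chi p q x)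
        = inc (lb H (\<tau> p) (\<tau> q) x - \<tau> (lb L p q x) + rev H rho p (\<tau> q) x - revD H rho q (\<tau> p) x)"
      by (simp add: twist_cev[OF ad] incs algebra_simps)
  qed
  have ep: "\<alpha> (Phi (inv \<beta> p)) - Phi p = nij H (\<tau> p) - \<tau> (nij L p)" for p
  proof (rule injD[OF incinj])
    have ip: "inc (Phi a) = nij E (s a) - s (nij L a)" for a using Phi_def by simp
    have "inc (\<alpha> (Phi (inv \<beta> p))) = nij E (s p + inc (\<tau> p)) - (s (nij L p) + inc (\<tau> (nij L p)))"
      by (simp only: inc_a ip gs g_nij g_s ib_nij[symmetric])
    also have "\<dots> = inc (Phi p) + inc (nij H (\<tau> p)) - inc (\<tau> (nij L p))"
      by (simp add: dlin_add[OF nijE] inc_nij[symmetric] ip)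
    finally show "inc (\<alpha> (Phi (inv \<beta> p)) - Phi p) = inc (nij H (\<tau> p) - \<tau> (nij L p))"
      by (simp add: incs algebra_simps)
  qed
  have "nab_equiv L H (\<lambda>p q n. \<alpha> (chi (inv \<beta> p) (inv \<beta> q) n))
               (\<lambda>p h n. \<alpha> (rho (inv \<beta> p) (inv \<alpha> h) n))
               (\<lambda>p. \<alpha> (Phi (inv \<beta> p))) chi rho Phi"
    unfolding nab_equiv_def using td er ec ep by blast
  moreover have "\<alpha> \<in> Aut H" unfolding Aut_def morph_def using ad a_lbr a_nij a_inj a_surj by (auto simp: bij_def)
  moreover have "\<beta> \<in> Aut L" unfolding Aut_def morph_def using bd b_lbr b_nij b_inj b_surj by (auto simp: bij_def)
  moreover have "PiMap inc proj s \<gamma> = (\<alpha>, \<beta>)" by (simp add: PiMap_def \<alpha>_def \<beta>_def)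
  ultimately show ?thesis by simp
qed






lemma part2:
  assumes a: "\<alpha> \<in> Aut H" and b: "\<beta> \<in> Aut L"
    and eqv: "nab_equiv L H (\<lambda>p q n. \<alpha> (chi (inv \<beta> p) (inv \<beta> q) n))
               (\<lambda>p h n. \<alpha> (rho (inv \<beta> p) (inv \<alpha> h) n))
               (\<lambda>p. \<alpha> (Phi (inv \<beta> p))) chi rho Phi"
  shows "(\<alpha>, \<beta>) \<in> PiMap inc proj s ` AutH E inc"
proof -
  have am: "morph H H \<alpha>" and abij: "bij \<alpha>" using a by (auto simp: Aut_def)
  have bm: "morph L L \<beta>" and bbij: "bij \<beta>" using b by (auto simp: Aut_def)
  have ad: "dlinear H H \<alpha>" and bd: "dlinear L L \<beta>" using am bm by (auto simp: morph_def)
  have a_lbr: "\<And>a b n. \<alpha> (lbr H a b n) = lbr H (\<alpha> a) (\<alpha> b) n"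
    and a_nij: "\<And>a. \<alpha> (nij H a) = nij H (\<alpha> a)" using am by (auto simp: morph_def)
  have b_lbr: "\<And>a b n. \<beta> (lbr L a b n) = lbr L (\<beta> a) (\<beta> b) n"
    and b_nij: "\<And>a. \<beta> (nij L a) = nij L (\<beta> a)" using bm by (auto simp: morph_def)
  have ainv: "\<And>h. inv \<alpha> (\<alpha> h) = h" and ainv2: "\<And>h. \<alpha> (inv \<alpha> h) = h"
    using abij by (auto simp: bij_def inv_f_f surj_f_inv_f)
  have binv: "\<And>p. inv \<beta> (\<beta> p) = p" and binv2: "\<And>p. \<beta> (inv \<beta> p) = p"
    using bbij by (auto simp: bij_def inv_f_f surj_f_inv_f)
  from eqv obtain \<tau> where td: "dlinear L H \<tau>"
    and er: "\<And>p h x. rev H (\<lambda>p h n. \<alpha> (rho (inv \<beta> p) (inv \<alpha> h) n)) p h x - rev H rho p h x = lb H (\<tau> p) h x"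
    and ec: "\<And>p q x. cev H (\<lambda>p q n. \<alpha> (chi (inv \<beta> p) (inv \<beta> q) n)) p q x - cev H chi p q x
            = lb H (\<tau> p) (\<tau> q) x - \<tau> (lb L p q x) + rev H rho p (\<tau> q) x - revD H rho q (\<tau> p) x"
    and ep: "\<And>p. \<alpha> (Phi (inv \<beta> p)) - Phi p = nij H (\<tau> p) - \<tau> (nij L p)"
    unfolding nab_equiv_def by blast
  have er': "\<alpha> (rev H rho p k x) = lb H (\<tau> (\<beta> p)) (\<alpha> k) x + rev H rho (\<beta> p) (\<alpha> k) x" for p k x
  proof -
    have "\<alpha> (rev H rho p k x) - rev H rho (\<beta> p) (\<alpha> k) x = lb H (\<tau> (\<beta> p)) (\<alpha> k) x"
      using er[of "\<beta> p" "\<alpha> k" x] by (simp only: twist_rev[OF ad] ainv binv)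
    then show ?thesis by (simp only: diff_eq_eq)
  qed
  have ec': "\<alpha> (cev H chi p q x) = (lb H (\<tau> (\<beta> p)) (\<tau> (\<beta> q)) x - \<tau> (lb L (\<beta> p) (\<beta> q) x)
      + rev H rho (\<beta> p) (\<tau> (\<beta> q)) x - revD H rho (\<beta> q) (\<tau> (\<beta> p)) x) + cev H chi (\<beta> p) (\<beta> q) x" for p q x
  proof -
    have "\<alpha> (cev H chi p q x) - cev H chi (\<beta> p) (\<beta> q) x = lb H (\<tau> (\<beta> p)) (\<tau> (\<beta> q)) x - \<tau> (lb L (\<beta> p) (\<beta> q) x)
      + rev H rho (\<beta> p) (\<tau> (\<beta> q)) x - revD H rho (\<beta> q) (\<tau> (\<beta> p)) x"
      using ec[of "\<beta> p" "\<beta> q" x] by (simp only: twist_cev[OF ad] binv)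
    then show ?thesis by (simp only: diff_eq_eq)
  qed
  have ep': "\<alpha> (Phi p) = (nij H (\<tau> (\<beta> p)) - \<tau> (nij L (\<beta> p))) + Phi (\<beta> p)" for p
  proof -
    have "\<alpha> (Phi p) - Phi (\<beta> p) = nij H (\<tau> (\<beta> p)) - \<tau> (nij L (\<beta> p))"
      using ep[of "\<beta> p"] by (simp only: binv)
    then show ?thesis by (simp only: diff_eq_eq)
  qed
  define \<gamma> where "\<gamma> e = s (\<beta> (proj e)) + inc (\<tau> (\<beta> (proj e)) + \<alpha> (pi e))" for e
  have d1: "dlinear E L (\<lambda>e. \<beta> (proj e))" by (rule dlin_comp[OF projd bd])
  have d2: "dlinear E E (\<lambda>e. s (\<beta> (proj e)))" by (rule dlin_comp[OF d1 s_lin])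
  have d3: "dlinear E H (\<lambda>e. \<tau> (\<beta> (proj e)))" by (rule dlin_comp[OF d1 td])
  have d4: "dlinear E H (\<lambda>e. \<alpha> (pi e))" by (rule dlin_comp[OF pid ad])
  have d5: "dlinear E H (\<lambda>e. \<tau> (\<beta> (proj e)) + \<alpha> (pi e))" by (rule dlin_plus[OF d3 d4 lca_der[OF lH]])
  have d6: "dlinear E E (\<lambda>e. inc (\<tau> (\<beta> (proj e)) + \<alpha> (pi e)))" by (rule dlin_comp[OF d5 incd])
  have gd: "dlinear E E \<gamma>"
  proof -
    have "\<gamma> = (\<lambda>e. s (\<beta> (proj e)) + inc (\<tau> (\<beta> (proj e)) + \<alpha> (pi e)))" using \<gamma>_def by (intro HOL.ext) simp
    then show ?thesis using dlin_plus[OF d2 d6 lca_der[OF lE]] by simp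
  qed
  have g_s: "\<gamma> (s p) = s (\<beta> p) + inc (\<tau> (\<beta> p))" for p by (simp add: \<gamma>_def dlin_zero[OF ad])
  have g_inc: "\<gamma> (inc h) = inc (\<alpha> h)" for h
    by (simp add: \<gamma>_def dlin_zero[OF bd] dlin_zero[OF td] dlin_zero[OF s_lin])
  have g_add: "\<gamma> (a + b) = \<gamma> a + \<gamma> b" for a b by (rule dlin_add[OF gd])
  have g_inj: "inj \<gamma>"
  proof (rule injI)
    fix a b assume ab: "\<gamma> a = \<gamma> b"
    define e where "e = a - b"
    have z: "\<gamma> e = 0" using ab by (simp add: e_def dlin_diff[OF gd])
    have pg: "proj (\<gamma> e) = \<beta> (proj e)" by (simp add: \<gamma>_def dlin_add[OF projd])
    have "\<beta> (proj e) = 0" using pg z by (simp add: dlin_zero[OF projd])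
    then have pe: "proj e = 0" using binv[of "proj e"] binv[of 0] dlin_zero[OF bd] by simp
    then have "\<gamma> e = inc (\<alpha> (pi e))" by (simp add: \<gamma>_def dlin_zero[OF bd] dlin_zero[OF td] dlin_zero[OF s_lin])
    then have "inc (\<alpha> (pi e)) = inc 0" using z dlin_zero[OF incd] by simp
    then have "\<alpha> (pi e) = 0" by (simp only: inc_eq)
    then have "pi e = 0" using ainv[of "pi e"] ainv[of 0] dlin_zero[OF ad] by simp
    then have "e = 0" using decomp[of e] pe dlin_zero[OF s_lin] dlin_zero[OF incd] by simp
    then show "a = b" by (simp add: e_def)
  qed
  have g_surj: "surj \<gamma>"
  proof (rule surjI)
    fix y
    let ?P = "proj y" let ?k = "pi y - \<tau> ?P"
    have "\<gamma> (s (inv \<beta> ?P) + inc (inv \<alpha> ?k)) = s ?P + inc (\<tau> ?P) + inc ?k"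
      by (simp add: g_add g_s g_inc binv2 ainv2)
    also have "\<dots> = s ?P + inc (pi y)" by (simp add: dlin_diff[OF incd])
    also have "\<dots> = y" by (rule decomp[symmetric])
    finally show "\<gamma> (s (inv \<beta> ?P) + inc (inv \<alpha> ?k)) = y" .
  qed
  have g_range: "\<gamma> ` range inc = range inc"
  proof
    show "\<gamma> ` range inc \<subseteq> range inc" using g_inc by auto
    show "range inc \<subseteq> \<gamma> ` range inc"
    proof
      fix y assume "y \<in> range inc"
      then obtain h where "y = inc h" by auto
      then have "y = \<gamma> (inc (inv \<alpha> h))" by (simp add: g_inc ainv2)
      then show "y \<in> \<gamma> ` range inc" by auto
    qed
  qed
  note incs = dlin_add[OF incd] dlin_diff[OF incd] dlin_neg[OF incd]
  have N1: "\<gamma> (nij E (s p)) = nij E (\<gamma> (s p))" for p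
  proof -
    have ns: "nij E (s q) = inc (Phi q) + s (nij L q)" for q using Phi_def by (simp add: algebra_simps)
    have "\<gamma> (nij E (s p)) = inc (\<alpha> (Phi p)) + (s (\<beta> (nij L p)) + inc (\<tau> (\<beta> (nij L p))))"
      by (simp only: ns g_add g_inc g_s)
    also have "\<dots> = inc (Phi (\<beta> p)) + s (nij L (\<beta> p)) + inc (nij H (\<tau> (\<beta> p)))"
      by (simp add: ep' b_nij incs algebra_simps)
    also have "\<dots> = nij E (\<gamma> (s p))"
      by (simp add: g_s dlin_add[OF nijE] ns inc_nij)
    finally show ?thesis .
  qed
  have N2: "\<gamma> (nij E (inc h)) = nij E (\<gamma> (inc h))" for h
    by (simp add: inc_nij[symmetric] g_inc a_nij)
  have g_nij: "\<gamma> (nij E e) = nij E (\<gamma> e)" for e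
  proof -
    have "\<gamma> (nij E (s (proj e) + inc (pi e))) = nij E (\<gamma> (s (proj e) + inc (pi e)))"
      by (simp only: dlin_add[OF nijE] g_add N1 N2)
    then show ?thesis by (simp only: decomp[symmetric])
  qed
  have B_ii: "\<gamma> (lbr E (inc h) (inc k) n) = lbr E (\<gamma> (inc h)) (\<gamma> (inc k)) n" for h k n
    by (simp add: inc_lbr[symmetric] g_inc a_lbr)
  have B_si: "\<gamma> (lbr E (s p) (inc k) n) = lbr E (\<gamma> (s p)) (\<gamma> (inc k)) n" for p k n
  proof (rule coeff_from_eval[OF lE gd])
    fix x
    have "\<gamma> (lb E (s p) (inc k) x) = inc (lb H (\<tau> (\<beta> p)) (\<alpha> k) x + rev H rho (\<beta> p) (\<alpha> k) x)"
      by (simp only: E_rho[symmetric] g_inc er')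
    also have "\<dots> = lb E (s (\<beta> p) + inc (\<tau> (\<beta> p))) (inc (\<alpha> k)) x"
      by (simp add: lb_addl[OF lE] E_rho E_inc_lb incs)
    also have "\<dots> = lb E (\<gamma> (s p)) (\<gamma> (inc k)) x" by (simp only: g_s g_inc)
    finally show "\<gamma> (lb E (s p) (inc k) x) = lb E (\<gamma> (s p)) (\<gamma> (inc k)) x" .
  qed
  have B_is: "\<gamma> (lbr E (inc k) (s p) n) = lbr E (\<gamma> (inc k)) (\<gamma> (s p)) n" for p k n
    by (rule skew_coeff[OF lE gd B_si])
  have B_ss: "\<gamma> (lbr E (s p) (s q) n) = lbr E (\<gamma> (s p)) (\<gamma> (s q)) n" for p q n
  proof (rule coeff_from_eval[OF lE gd])
    fix x
    have bl: "\<beta> (lb L p q x) = lb L (\<beta> p) (\<beta> q) x" by (rule morph_lb[OF lL bd b_lbr])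
    have "\<gamma> (lb E (s p) (s q) x) = inc (\<alpha> (cev H chi p q x)) + (s (lb L (\<beta> p) (\<beta> q) x) + inc (\<tau> (lb L (\<beta> p) (\<beta> q) x)))"
      by (simp only: E_chi g_add g_inc g_s bl)
    also have "\<dots> = inc (cev H chi (\<beta> p) (\<beta> q) x) + s (lb L (\<beta> p) (\<beta> q) x)
        + inc (rev H rho (\<beta> p) (\<tau> (\<beta> q)) x) + - inc (revD H rho (\<beta> q) (\<tau> (\<beta> p)) x)
        + inc (lb H (\<tau> (\<beta> p)) (\<tau> (\<beta> q)) x)"
      by (simp add: ec' incs algebra_simps)
    also have "\<dots> = lb E (s (\<beta> p) + inc (\<tau> (\<beta> p))) (s (\<beta> q) + inc (\<tau> (\<beta> q))) x"
      by (simp only: lb_addl[OF lE] lb_addr[OF lE] E_chi E_rho E_inc_s E_inc_lb add.assoc) (simp add: ac_simps)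
    also have "\<dots> = lb E (\<gamma> (s p)) (\<gamma> (s q)) x" by (simp only: g_s)
    finally show "\<gamma> (lb E (s p) (s q) x) = lb E (\<gamma> (s p)) (\<gamma> (s q)) x" .
  qed
  have g_lbr: "\<gamma> (lbr E a b n) = lbr E (\<gamma> a) (\<gamma> b) n" for a b n
  proof -
    have "\<gamma> (lbr E (s (proj a) + inc (pi a)) (s (proj b) + inc (pi b)) n)
        = lbr E (\<gamma> (s (proj a) + inc (pi a))) (\<gamma> (s (proj b) + inc (pi b))) n"
      by (simp only: lca_addl[OF lE] lca_addr[OF lE] g_add B_ii B_si B_is B_ss)
    then show ?thesis by (simp only: decomp[symmetric])
  qed
  have gm: "morph E E \<gamma>" unfolding morph_def using gd g_lbr g_nij by auto
  have gA: "\<gamma> \<in> AutH E inc"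
    unfolding AutH_def Aut_def using gm g_inj g_surj g_range by (auto simp: bij_def)
  have "PiMap inc proj s \<gamma> = (\<alpha>, \<beta>)"
    unfolding PiMap_def
    by (auto simp: g_inc g_s dlin_add[OF projd] intro!: HOL.ext)
  then show ?thesis using gA by (auto intro: rev_image_eqI)
qed

end


theorem theorem6p6:
  fixes H :: "('h::ab_group_add) nlca" and E :: "('e::ab_group_add) nlca"
    and L :: "('l::ab_group_add) nlca"
    and inc :: "'h \<Rightarrow> 'e" and proj :: "'e \<Rightarrow> 'l" and s :: "'l \<Rightarrow> 'e"
    and chi :: "'l \<Rightarrow> 'l \<Rightarrow> nat \<Rightarrow> 'h" and rho :: "'l \<Rightarrow> 'h \<Rightarrow> nat \<Rightarrow> 'h"
    and Phi :: "'l \<Rightarrow> 'h"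
  assumes ext: "nab_extension H E L inc proj"
    and s_lin: "dlinear L E s"
    and s_sec: "\<forall>p. proj (s p) = p"
    and chi_def: "\<forall>p q n. inc (chi p q n) = lbr E (s p) (s q) n - s (lbr L p q n)"
    and rho_def: "\<forall>p h n. inc (rho p h n) = lbr E (s p) (inc h) n"
    and Phi_def: "\<forall>p. inc (Phi p) = nij E (s p) - s (nij L p)"
  shows "inj_on (\<lambda>\<gamma>. \<gamma>) (AutLH E inc proj s)
    \<and> AutLH E inc proj s \<subseteq> AutH E inc
    \<and> {\<gamma> \<in> AutH E inc. PiMap inc proj s \<gamma> = (id, id)} = AutLH E inc proj s
    \<and> PiMap inc proj s ` AutH E inc =
        {(\<alpha>, \<beta>). \<alpha> \<in> Aut H \<and> \<beta> \<in> Aut L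
           \<and> nab_equiv L H
               (\<lambda>p q n. \<alpha> (chi (inv \<beta> p) (inv \<beta> q) n))
               (\<lambda>p h n. \<alpha> (rho (inv \<beta> p) (inv \<alpha> h) n))
               (\<lambda>p. \<alpha> (Phi (inv \<beta> p)))
               chi rho Phi}"
  proof -
  interpret nabx H E L inc proj s chi rho Phi
    by (rule nabx.intro) (fact ext s_lin s_sec chi_def rho_def Phi_def)+
  have 1: "PiMap inc proj s ` AutH E inc \<subseteq> {(\<alpha>, \<beta>). \<alpha> \<in> Aut H \<and> \<beta> \<in> Aut L
           \<and> nab_equiv L H
               (\<lambda>p q n. \<alpha> (chi (inv \<beta> p) (inv \<beta> q) n))
               (\<lambda>p h n. \<alpha> (rho (inv \<beta> p) (inv \<alpha> h) n))
               (\<lambda>p. \<alpha> (Phi (inv \<beta> p)))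
               chi rho Phi}"
    by (rule image_subsetI) (rule part1)
  have 2: "{(\<alpha>, \<beta>). \<alpha> \<in> Aut H \<and> \<beta> \<in> Aut L
           \<and> nab_equiv L H
               (\<lambda>p q n. \<alpha> (chi (inv \<beta> p) (inv \<beta> q) n))
               (\<lambda>p h n. \<alpha> (rho (inv \<beta> p) (inv \<alpha> h) n))
               (\<lambda>p. \<alpha> (Phi (inv \<beta> p)))
               chi rho Phi} \<subseteq> PiMap inc proj s ` AutH E inc"
    by clarify (rule part2; assumption)
  show ?thesis
  proof (intro conjI)
    show "inj_on (\<lambda>\<gamma>. \<gamma>) (AutLH E inc proj s)" by (simp add: inj_on_def)
    show "AutLH E inc proj s \<subseteq> AutH E inc" by (auto simp: AutLH_def)
    show "{\<gamma> \<in> AutH E inc. PiMap inc proj s \<gamma> = (id, id)} = AutLH E inc proj s"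
      by (simp add: AutLH_def)
  qed (use 1 2 in blast)
qed

end
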